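(* Let $m=2^{l_m}$ with $l_m\ge 1$, let $(v_0,\dots,v_{m-1})$ be a Cantor basis of $\mathbb{F}_{2^m}$, and let $l$ be an integer with $0\le l<m/2$. Put $n=m\cdot 2^l$ and $$\Sigma := v_{l+m/2}+V_l=\{v_{l+m/2}+u : u\in V_l\},\qquad \Omega:=\Sigma\cup\phi_2(\Sigma)\cup\phi_2^{\circ 2}(\Sigma)\cup\cdots\cup\phi_2^{\circ(m-1)}(\Sigma).$$ Then $\mathrm{Ord}_{\phi_2}(\Sigma)=m$, the sets $\Sigma,\phi_2(\Sigma),\dots,\phi_2^{\circ(m-1)}(\Sigma)$ are pairwise disjoint (so $\Sigma$ is a Frobenius partition of $\Omega$), and $|\Omega|=n$.
   Context: A Cantor basis of $\mathbb{F}_{2^m}$ (for $m$ a power of $2$) is an $\mathbb{F}_2$-basis $(v_0,\dots,v_{m-1})$ of $\mathbb{F}_{2^m}$ with $v_0=1$ and $v_i^2+v_i=v_{i-1}$ for $0<i<m$. For $0\le i\le m$ let $V_0=\{0\}$ and $V_i=\mathrm{span}_{\mathbb{F}_2}\{v_0,\dots,v_{i-1}\}$. $\phi_2:\mathbb{F}_{2^m}\to\mathbb{F}_{2^m}$, $a\mapsto a^2$, is the Frobenius map; $\phi_2^{\circ j}$ denotes its $j$-fold iterate, and for a set $S$, $\phi_2(S)=\{\phi_2(s):s\in S\}$. For a set $S\subseteq\mathbb{F}_{2^m}$, $\mathrm{Ord}_{\phi_2}(S)$ is the least positive integer $j$ with $\phi_2^{\circ j}(S)=S$. Given $\mathrm{Ord}_{\phi_2}(\Sigma)=j$,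 $\Sigma$ is called a Frobenius partition of $\Omega$ if $\Omega=\Sigma\cup\phi_2(\Sigma)\cup\dots\cup\phi_2^{\circ(j-1)}(\Sigma)$ with these $j$ sets pairwise disjoint. *)

theory Defs
  imports Main
begin

text \<open>F2-span of v_0,...,v_{i-1}: all subset sums (coefficients in F_2).\<close>
definition Vspan :: "(nat \<Rightarrow> 'a::field) \<Rightarrow> nat \<Rightarrow> 'a set" where
  "Vspan v i = {(\<Sum>j\<in>J. v j) | J. J \<subseteq> {..<i}}"

text \<open>Cantor basis of a field of order 2^m: an F2-basis (every element is a unique
  F2-combination of v_0..v_{m-1}) with v_0 = 1 and v_i^2 + v_i = v_{i-1}.\<close>
definition cantor_basis :: "nat \<Rightarrow> (nat \<Rightarrow> 'a::field) \<Rightarrow> bool" where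
  "cantor_basis m v \<longleftrightarrow>
     bij_betw (\<lambda>J. \<Sum>j\<in>J. v j) (Pow {..<m}) (UNIV :: 'a set) \<and>
     v 0 = 1 \<and> (\<forall>i. 0 < i \<and> i < m \<longrightarrow> v i ^ 2 + v i = v (i - 1))"

definition frob :: "'a::field \<Rightarrow> 'a" where
  "frob a = a ^ 2"

definition ord_frob :: "'a::field set \<Rightarrow> nat" where
  "ord_frob S = (LEAST j. 0 < j \<and> (frob ^^ j) ` S = S)"

definition frobenius_partition :: "'a::field set \<Rightarrow> 'a set \<Rightarrow> bool" where
  "frobenius_partition \<Sigma> \<Omega> \<longleftrightarrow>
     \<Omega> = (\<Union>k<ord_frob \<Sigma>. (frob ^^ k) ` \<Sigma>) \<and>
     (\<forall>i<ord_frob \<Sigma>. \<forall>k<ord_frob \<Sigma>. i \<noteq> k \<longrightarrow>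
        (frob ^^ i) ` \<Sigma> \<inter> (frob ^^ k) ` \<Sigma> = {})"

end

theory Submission
  imports Defs "HOL-Computational_Algebra.Primes"
begin

lemma char2:
  assumes "card (UNIV :: 'a::{finite,field} set) = 2 ^ m" "m \<ge> 1"
  shows "(1::'a) + 1 = 0"
proof -
  have inj: "inj (\<lambda>x::'a. x + 1)" by (auto simp: inj_def)
  have surj: "(\<lambda>x::'a. x + 1) ` UNIV = UNIV"
    by (auto intro!: image_eqI[where x="_ - 1"])
  have "sum (\<lambda>x::'a. x) UNIV = sum (\<lambda>x. x) ((\<lambda>x::'a. x + 1) ` UNIV)" using surj by simp
  also have "\<dots> = sum (\<lambda>x::'a. x + 1) UNIV" by (subst sum.reindex[OF inj]) (simp add: comp_def)
  also have "\<dots> = sum (\<lambda>x::'a. x) UNIV + of_nat (card (UNIV::'a set))"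
    by (simp add: sum.distrib)
  finally have "(of_nat (2^m) :: 'a) = 0" using assms(1) by simp
  hence "(2::'a)^m = 0" by simp
  hence "(2::'a) = 0" by simp
  thus ?thesis by simp
qed

lemma add_self: "(1::'a::field) + 1 = 0 \<Longrightarrow> x + x = (0::'a)"
proof -
  assume "(1::'a) + 1 = 0"
  hence "(1 + 1) * x = 0" by simp
  thus ?thesis by (simp add: distrib_right)
qed

lemma frob_add: "(1::'a::field) + 1 = 0 \<Longrightarrow> frob (a + b) = frob a + frob (b::'a)"
proof -
  assume c: "(1::'a) + 1 = 0"
  have "frob (a + b) = frob a + frob b + (a*b + a*b)"
    by (simp add: frob_def power2_eq_square algebra_simps)
  thus ?thesis using add_self[OF c, of "a*b"] by simp
qed

definition Lm :: "'a::field \<Rightarrow> 'a" where "Lm x = x^2 + x"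

lemma Lm_add: "(1::'a::field) + 1 = 0 \<Longrightarrow> Lm (a + b) = Lm a + Lm (b::'a)"
  using frob_add[of a b] by (simp add: Lm_def frob_def algebra_simps)

lemma funpow_additive:
  fixes f :: "'a::ab_group_add \<Rightarrow> 'a"
  assumes "\<And>a b. f (a + b) = f a + f (b::'a::ab_group_add)"
  shows "(f ^^ n) (a + b) = (f ^^ n) a + (f ^^ n) b"
  by (induction n) (simp_all add: assms)

lemma additive_zero:
  fixes f :: "'a::ab_group_add \<Rightarrow> 'a"
  assumes "\<And>a b. f (a + b) = f a + f (b::'a::ab_group_add)"
  shows "f 0 = 0"
  using assms[of 0 0] by simp

lemma additive_sum:
  fixes f :: "'a::ab_group_add \<Rightarrow> 'a"
  assumes "\<And>a b. f (a + b) = f a + f (b::'a::ab_group_add)"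
  shows "f (sum g A) = sum (\<lambda>x. f (g x)) A"
  by (induction A rule: infinite_finite_induct) (simp_all add: assms additive_zero[OF assms])

lemma Lm_pow_add: "(1::'a::field) + 1 = 0 \<Longrightarrow> (Lm ^^ n) (a + b) = (Lm ^^ n) a + (Lm ^^ n) (b::'a)"
  by (rule funpow_additive) (rule Lm_add)

lemma frob_pow2:
  assumes c: "(1::'a::field) + 1 = 0"
  shows "(frob ^^ (2^t)) (x::'a) = (Lm ^^ (2^t)) x + x"
proof (induction t arbitrary: x)
  case 0
  then show ?case using add_self[OF c, of x] by (simp add: Lm_def frob_def add.assoc)
next
  case (Suc t)
  have e: "(2::nat)^Suc t = 2^t + 2^t" by simp
  have "(frob ^^ (2^Suc t)) x = (frob ^^ (2^t)) ((frob ^^ (2^t)) x)"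
    by (simp only: e funpow_add comp_apply)
  also have "\<dots> = (Lm ^^ (2^t)) ((Lm ^^ (2^t)) x + x) + ((Lm ^^ (2^t)) x + x)"
    using Suc by simp
  also have "\<dots> = (Lm ^^ (2^t)) ((Lm ^^ (2^t)) x) + ((Lm ^^ (2^t)) x + (Lm ^^ (2^t)) x) + x"
    by (simp add: Lm_pow_add[OF c] algebra_simps)
  also have "\<dots> = (Lm ^^ (2^t)) ((Lm ^^ (2^t)) x) + x"
    using add_self[OF c] by simp
  also have "\<dots> = (Lm ^^ (2^Suc t)) x + x"
    by (simp only: e funpow_add comp_apply)
  finally show ?case .
qed

lemma comm1:
  assumes "\<And>x. f (g x) = g (f x)"
  shows "f ((g ^^ n) x) = (g ^^ n) (f x)"
  by (induction n) (simp_all add: assms)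

lemma comm2:
  assumes "\<And>x. f (g x) = g (f x)"
  shows "(f ^^ j) ((g ^^ n) x) = (g ^^ n) ((f ^^ j) x)"
proof -
  have "\<And>x. (g ^^ n) (f x) = f ((g ^^ n) x)" using comm1[where f=f and g=g, OF assms] by simp
  from comm1[where f="g ^^ n" and g=f and n=j and x=x, OF this] show ?thesis by simp
qed

lemma frob_Lm: "(1::'a::field) + 1 = 0 \<Longrightarrow> frob (Lm x) = Lm (frob (x::'a))"
  using frob_add[of "x^2" x] by (simp add: Lm_def frob_def power2_eq_square)

lemma Lm_v:
  assumes cb: "cantor_basis m v" and c: "(1::'a::field) + 1 = 0" and j: "j < m"
  shows "(Lm ^^ i) ((v::nat \<Rightarrow> 'a) j) = (if i \<le> j then v (j - i) else 0)"
proof (induction i)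
  case 0 then show ?case by simp
next
  case (Suc i)
  have v0: "v 0 = 1" and rec: "\<And>i. 0 < i \<Longrightarrow> i < m \<Longrightarrow> v i ^ 2 + v i = v (i - 1)"
    using cb by (auto simp: cantor_basis_def)
  show ?case
  proof (cases "Suc i \<le> j")
    case True
    then have "(Lm ^^ Suc i) (v j) = Lm (v (j - i))" using Suc by simp
    also have "\<dots> = v (j - i - 1)" using rec[of "j - i"] True j by (simp add: Lm_def)
    finally show ?thesis using True by simp
  next
    case False
    show ?thesis
    proof (cases "i = j")
      case True
      then show ?thesis using Suc v0 c by (simp add: Lm_def)
    next
      case False2: False
      then show ?thesis using Suc False by (simp add: Lm_def)
    qed
  qed
qed

lemma kernel:
  assumes cb: "cantor_basis m v" and c: "(1::'a::field) + 1 = 0"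
    and J: "J \<subseteq> {..<m}" and lm: "l \<le> m"
    and z: "(Lm ^^ l) (sum (v::nat \<Rightarrow> 'a) J) = 0"
  shows "J \<subseteq> {..<l}"
proof -
  have bij: "bij_betw (\<lambda>J. \<Sum>j\<in>J. v j) (Pow {..<m}) (UNIV :: 'a set)"
    using cb by (simp add: cantor_basis_def)
  have fin: "finite J" using J finite_subset by blast
  have "(Lm ^^ l) (sum v J) = sum (\<lambda>j. (Lm ^^ l) (v j)) J"
    by (rule additive_sum) (rule Lm_pow_add[OF c])
  also have "\<dots> = sum (\<lambda>j. if l \<le> j then v (j - l) else 0) J"
    using Lm_v[OF cb c] J by (intro sum.cong) auto
  also have "\<dots> = sum (\<lambda>j. v (j - l)) (J \<inter> {l..})"
    using fin by (simp add: sum.If_cases Int_def)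
  also have "\<dots> = sum v ((\<lambda>j. j - l) ` (J \<inter> {l..}))"
    by (subst sum.reindex) (auto simp: inj_on_def)
  finally have "sum v ((\<lambda>j. j - l) ` (J \<inter> {l..})) = sum v {}" using z by simp
  moreover have "(\<lambda>j. j - l) ` (J \<inter> {l..}) \<in> Pow {..<m}" using J by auto
  ultimately have "(\<lambda>j. j - l) ` (J \<inter> {l..}) = {}"
    using bij_betw_imp_inj_on[OF bij] unfolding inj_on_def by blast
  thus ?thesis by auto
qed

lemma period:
  assumes "(g ^^ (2^n)) x = x" "(g ^^ (2^(n-1))) x \<noteq> x" "0 < d" "d < 2^n"
  shows "(g ^^ d) x \<noteq> x"
proof
  assume h: "(g ^^ d) x = x"
  define p where "p = (LEAST p. 0 < p \<and> (g ^^ p) x = x)"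
  have p: "0 < p \<and> (g ^^ p) x = x" unfolding p_def by (rule LeastI[of _ d]) (use h assms in auto)
  have pd: "p \<le> d" unfolding p_def by (rule Least_le) (use h assms in auto)
  have "(g ^^ (2^n mod p)) x = x" using funpow_mod_eq[where f=g and n=p and x=x and m="2^n"] p assms(1) by simp
  moreover have "2^n mod p < p" using p by simp
  ultimately have "2^n mod p = 0"
    using not_less_Least[of "2^n mod p" "\<lambda>p. 0 < p \<and> (g ^^ p) x = x"] unfolding p_def[symmetric]
    by auto
  hence "p dvd 2^n" by auto
  then obtain i where i: "i \<le> n" "p = 2^i" using divides_primepow_nat[of 2 p n] by auto
  have "i \<noteq> n" using i pd assms by auto
  hence "p dvd 2^(n-1)" using i by (simp add: le_imp_power_dvd)
  hence "2^(n-1) mod p = 0" by simp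
  hence "(g ^^ (2^(n-1))) x = x" using funpow_mod_eq[where f=g and n=p and x=x and m="2^(n-1)"] p by simp
  thus False using assms(2) by simp
qed

theorem proposition1:
  fixes v :: "nat \<Rightarrow> 'a::{finite,field}" and lm m l :: nat
  assumes "lm \<ge> 1" and "m = 2 ^ lm"
    and "card (UNIV :: 'a set) = 2 ^ m"
    and "cantor_basis m v"
    and "l < m div 2"
  defines "\<Sigma> \<equiv> (\<lambda>u. v (l + m div 2) + u) ` Vspan v l"
  defines "\<Omega> \<equiv> (\<Union>k<m. (frob ^^ k) ` \<Sigma>)"
  shows "ord_frob \<Sigma> = m
         \<and> (\<forall>i<m. \<forall>k<m. i \<noteq> k \<longrightarrow> (frob ^^ i) ` \<Sigma> \<inter> (frob ^^ k) ` \<Sigma> = {})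
         \<and> frobenius_partition \<Sigma> \<Omega>
         \<and> card \<Omega> = m * 2 ^ l"
proof -
  note cb = assms(4)
  have m1: "m \<ge> 1" using assms(1,2) by simp
  have c: "(1::'a) + 1 = 0" using char2[OF assms(3) m1] .
  define k where "k = m div 2"
  have kpow: "k = 2^(lm - 1)" using assms(1,2) unfolding k_def
    by (metis One_nat_def Suc_pred div_mult_self1_is_m less_eq_Suc_le power_Suc mult.commute zero_less_numeral)
  have k1: "k \<ge> 1" using kpow by simp
  have km: "k < m" "l + k < m" using assms(1,2,5) kpow k_def by auto
  define w where "w = v (l + k)"
  have bij: "bij_betw (\<lambda>J. \<Sum>j\<in>J. v j) (Pow {..<m}) (UNIV :: 'a set)"
    using cb by (simp add: cantor_basis_def)
  have V: "Vspan v l = (\<lambda>J. sum v J) ` Pow {..<l}" unfolding Vspan_def by auto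
  have Lw: "(Lm ^^ l) w = v k" unfolding w_def using Lm_v[OF cb c km(2)] by simp
  have S1: "\<Sigma> = {x. (Lm ^^ l) x = v k}"
  proof (intro equalityI subsetI)
    fix x assume "x \<in> \<Sigma>"
    then obtain J where J: "J \<subseteq> {..<l}" "x = w + sum v J"
      unfolding \<Sigma>_def V k_def[symmetric] w_def[symmetric] by auto
    have sJ: "(Lm ^^ l) (sum v J) = sum (\<lambda>j. (Lm ^^ l) (v j)) J"
      by (rule additive_sum) (rule Lm_pow_add[OF c])
    have "(Lm ^^ l) x = v k + sum (\<lambda>j. (Lm ^^ l) (v j)) J"
      using J(2) Lw sJ by (simp add: Lm_pow_add[OF c])
    also have "sum (\<lambda>j. (Lm ^^ l) (v j)) J = 0"
      using J(1) km Lm_v[OF cb c] by (intro sum.neutral) auto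
    finally show "x \<in> {x. (Lm ^^ l) x = v k}" by simp
  next
    fix x assume "x \<in> {x. (Lm ^^ l) x = v k}"
    hence x: "(Lm ^^ l) x = v k" by simp
    have "(Lm ^^ l) (x + w) = 0" using x Lw add_self[OF c] by (simp add: Lm_pow_add[OF c])
    moreover obtain J where J: "J \<subseteq> {..<m}" "x + w = sum v J"
      using bij_betw_imp_surj_on[OF bij] by (metis (no_types, lifting) PowD UNIV_I imageE)
    ultimately have "J \<subseteq> {..<l}" using kernel[OF cb c J(1)] km by simp
    hence "x + w \<in> Vspan v l" using J V by auto
    moreover have "x = w + (x + w)" using add_self[OF c, of w] by (simp add: algebra_simps)
    ultimately show "x \<in> \<Sigma>" unfolding \<Sigma>_def k_def[symmetric] w_def[symmetric] by blast
  qed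
  have injf: "inj (frob :: 'a \<Rightarrow> 'a)"
  proof (rule injI)
    fix a b :: 'a assume "frob a = frob b"
    hence "frob (a + b) = 0" using frob_add[OF c] add_self[OF c] by simp
    hence "a + b = 0" by (simp add: frob_def)
    thus "a = b" using add_self[OF c, of b] by (metis add_right_cancel)
  qed
  have bijf: "bij (frob :: 'a \<Rightarrow> 'a)" using injf finite_UNIV_inj_surj[of "frob :: 'a \<Rightarrow> 'a"] by (simp add: bij_def)
  have bijj: "bij (frob ^^ j :: 'a \<Rightarrow> 'a)" for j using bijf by simp
  have comm: "(frob ^^ j) ((Lm ^^ l) x) = (Lm ^^ l) ((frob ^^ j) (x::'a))" for j x
    by (rule comm2) (rule frob_Lm[OF c])
  define P where "P j = (frob ^^ j) (v k)" for j
  have S3: "(frob ^^ j) ` \<Sigma> = {y. (Lm ^^ l) y = P j}" for j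
  proof (intro equalityI subsetI)
    fix y assume "y \<in> (frob ^^ j) ` \<Sigma>"
    then obtain x where "x \<in> \<Sigma>" "y = (frob ^^ j) x" by auto
    thus "y \<in> {y. (Lm ^^ l) y = P j}" using S1 comm[of j x, symmetric] P_def by auto
  next
    fix y assume y: "y \<in> {y. (Lm ^^ l) y = P j}"
    obtain x where x: "y = (frob ^^ j) x" using bij_is_surj[OF bijj[of j]] by (metis UNIV_I imageE)
    have "(frob ^^ j) ((Lm ^^ l) x) = (frob ^^ j) (v k)" using y x comm P_def by auto
    hence "(Lm ^^ l) x = v k" using bij_is_inj[OF bijj[of j]] by (simp add: inj_eq)
    thus "y \<in> (frob ^^ j) ` \<Sigma>" using x S1 by auto
  qed
  have Pm: "P m = v k"
    using frob_pow2[OF c, of lm "v k"] Lm_v[OF cb c km(1), of m] assms(2) km P_def by simp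
  have Pk: "P k \<noteq> v k"
  proof -
    have "P k = (Lm ^^ k) (v k) + v k" using frob_pow2[OF c, of "lm - 1" "v k"] kpow P_def by simp
    also have "\<dots> = 1 + v k" using Lm_v[OF cb c km(1), of k] cb by (simp add: cantor_basis_def)
    finally show ?thesis by simp
  qed
  have S4: "P d \<noteq> v k" if "0 < d" "d < m" for d
    using period[where g=frob and n=lm and x="v k" and d=d] Pm Pk that assms(2) kpow unfolding P_def by simp
  have S5: "P i \<noteq> P j" if "i < m" "j < m" "i \<noteq> j" for i j
  proof -
    have *: "P a \<noteq> P b" if "a < b" "b < m" for a b
    proof
      assume "P a = P b"
      hence "(frob ^^ a) (v k) = (frob ^^ a) ((frob ^^ (b - a)) (v k))"
        unfolding P_def using that by (metis add_diff_inverse_nat comp_apply funpow_add not_less_iff_gr_or_eq)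
      hence "P (b - a) = v k" using bij_is_inj[OF bijj[of a]] P_def by (simp add: inj_eq)
      thus False using S4[of "b - a"] that by simp
    qed
    show ?thesis using *[of i j] *[of j i] that by (cases "i < j") auto
  qed
  have wS: "w \<in> \<Sigma>" using S1 Lw by simp
  have ord: "ord_frob \<Sigma> = m"
    unfolding ord_frob_def
  proof (rule Least_equality)
    show "0 < m \<and> (frob ^^ m) ` \<Sigma> = \<Sigma>" using m1 S3[of m] Pm S1 by simp
  next
    fix y assume y: "0 < y \<and> (frob ^^ y) ` \<Sigma> = \<Sigma>"
    show "m \<le> y"
    proof (rule ccontr)
      assume "\<not> m \<le> y"
      moreover have "P y = v k"
      proof -
        have "w \<in> (frob ^^ y) ` \<Sigma>" using y wS by simp
        hence "(Lm ^^ l) w = P y" using S3[of y] by simp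
        thus ?thesis using Lw by simp
      qed
      ultimately show False using S4 y by simp
    qed
  qed
  have disj: "\<forall>i<m. \<forall>k<m. i \<noteq> k \<longrightarrow> (frob ^^ i) ` \<Sigma> \<inter> (frob ^^ k) ` \<Sigma> = {}"
  proof (intro allI impI)
    fix i j assume ij: "i < m" "j < m" "i \<noteq> j"
    have "P i \<noteq> P j" using S5 ij by blast
    thus "(frob ^^ i) ` \<Sigma> \<inter> (frob ^^ j) ` \<Sigma> = {}" unfolding S3[of i] S3[of j] by auto
  qed
  have cardS: "card \<Sigma> = 2 ^ l"
  proof -
    have "inj_on (\<lambda>J. sum v J) (Pow {..<l})"
      by (rule inj_on_subset[OF bij_betw_imp_inj_on[OF bij]]) (use km in auto)
    hence "card (Vspan v l) = 2 ^ l" unfolding V by (simp add: card_image card_Pow)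
    thus ?thesis unfolding \<Sigma>_def by (simp add: card_image)
  qed
  have cardO: "card \<Omega> = m * 2 ^ l"
  proof -
    have "card \<Omega> = (\<Sum>j<m. card ((frob ^^ j) ` \<Sigma>))"
      unfolding \<Omega>_def
    proof (rule card_UN_disjoint)
      show "\<forall>i\<in>{..<m}. \<forall>j\<in>{..<m}. i \<noteq> j \<longrightarrow> (frob ^^ i) ` \<Sigma> \<inter> (frob ^^ j) ` \<Sigma> = {}"
        using disj by blast
    qed simp_all
    also have "\<dots> = (\<Sum>j<m. 2 ^ l)"
    proof (rule sum.cong)
      fix j
      have "inj_on (frob ^^ j) \<Sigma>" using bij_is_inj[OF bijj[of j]] by (rule inj_on_subset) simp
      thus "card ((frob ^^ j) ` \<Sigma>) = 2 ^ l" using cardS by (simp add: card_image)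
    qed simp
    finally show ?thesis by simp
  qed
  show ?thesis using ord disj cardO unfolding frobenius_partition_def \<Omega>_def by simp
qed

end
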